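(* Let $1\le i<n$ be integers with $\gcd(n,i)=d$, and let $J_n=\sum_{j=1}^{n-1}E_{j,j+1}\in M_n(\mathbb{C})$. Then $$l(\{J_n^i,(J_n^T)^{n-i}\})=l_0(\{J_n^i,(J_n^T)^{n-i}\})=\frac{2n}{d}-2.$$
   Context: $E_{i,j}$ is the matrix unit. For a finite subset $\mathcal S$ of $M_n(\mathbb{C})$: a word of length $m$ is a product $S_1\cdots S_m$ with $S_j\in\mathcal S$, the word of length $0$ being $I_n$. $\mathcal L_k(\mathcal S)$ is the span of words of length at most $k$ including $I_n$; $\mathcal L_k^0(\mathcal S)$ is the span of words of length between $1$ and $k$ (identity not automatically included). $l(\mathcal S)$ is the smallest $k$ with $\mathcal L_k(\mathcal S)=\mathcal L_{k+1}(\mathcal S)$, and $l_0(\mathcal S)$ is the smallest $k$ with $\mathcal L^0_k(\mathcal S)=\mathcal L^0_{k+1}(\mathcal S)$. *)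

theory Defs
  imports "Jordan_Normal_Form.Matrix"
begin

definition lin_comb :: "nat \<Rightarrow> (complex \<times> complex mat) list \<Rightarrow> complex mat" where
  "lin_comb n xs = foldr (\<lambda>(c, X) acc. c \<cdot>\<^sub>m X + acc) xs (0\<^sub>m n n)"

definition cspan :: "nat \<Rightarrow> complex mat set \<Rightarrow> complex mat set" where
  "cspan n T = {lin_comb n xs | xs. set (map snd xs) \<subseteq> T}"

definition words :: "nat \<Rightarrow> complex mat set \<Rightarrow> nat \<Rightarrow> complex mat set" where
  "words n S m = {foldr (*) ws (1\<^sub>m n) | ws. length ws = m \<and> set ws \<subseteq> S}"

definition L :: "nat \<Rightarrow> complex mat set \<Rightarrow> nat \<Rightarrow> complex mat set" where
  "L n S k = cspan n (\<Union>m\<in>{0..k}. words n S m)"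

definition L0 :: "nat \<Rightarrow> complex mat set \<Rightarrow> nat \<Rightarrow> complex mat set" where
  "L0 n S k = cspan n (\<Union>m\<in>{1..k}. words n S m)"

definition len :: "nat \<Rightarrow> complex mat set \<Rightarrow> nat" where
  "len n S = (LEAST k. L n S k = L n S (Suc k))"

definition len0 :: "nat \<Rightarrow> complex mat set \<Rightarrow> nat" where
  "len0 n S = (LEAST k. L0 n S k = L0 n S (Suc k))"

text \<open>J_n = sum_{j=1}^{n-1} E_{j,j+1}; with 0-based indices: entry (r,c) is 1 iff c = r+1.\<close>
definition Jmat :: "nat \<Rightarrow> complex mat" where
  "Jmat n = mat n n (\<lambda>(r, c). if c = r + 1 then 1 else 0)"

end

theory Submission
  imports Defs "HOL-Number_Theory.Cong"
begin


definition pmat :: "nat \<Rightarrow> (nat \<Rightarrow> nat option) \<Rightarrow> complex mat" where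
  "pmat n f = mat n n (\<lambda>(a,c). if f c = Some a then 1 else 0)"

lemma pmat_carrier[simp]: "pmat n f \<in> carrier_mat n n"
  by (simp add: pmat_def)

lemma pmat_index[simp]: "a < n \<Longrightarrow> c < n \<Longrightarrow> pmat n f $$ (a,c) = (if f c = Some a then 1 else 0)"
  by (simp add: pmat_def)

lemma pmat_eqI: "(\<And>c. c < n \<Longrightarrow> f c = g c) \<Longrightarrow> pmat n f = pmat n g"
  by (rule eq_matI) (auto simp: pmat_def)

lemma pmat_one: "1\<^sub>m n = pmat n Some"
  by (rule eq_matI) (auto simp: pmat_def)

lemma pmat_none: "(\<And>c. c < n \<Longrightarrow> f c = None) \<Longrightarrow> pmat n f = 0\<^sub>m n n"
  by (rule eq_matI) (auto simp: pmat_def)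

lemma pmat_mult:
  assumes rg: "\<And>c b. c < n \<Longrightarrow> g c = Some b \<Longrightarrow> b < n"
  shows "pmat n f * pmat n g = pmat n (\<lambda>c. Option.bind (g c) f)"
proof (rule eq_matI)
  fix a c assume a: "a < dim_row (pmat n (\<lambda>c. Option.bind (g c) f))"
    and c: "c < dim_col (pmat n (\<lambda>c. Option.bind (g c) f))"
  hence a: "a < n" and c: "c < n" by (auto simp: pmat_def)
  have "(pmat n f * pmat n g) $$ (a,c) = (\<Sum>b\<in>{0..<n}. pmat n f $$ (a,b) * pmat n g $$ (b,c))"
    using a c by (simp add: scalar_prod_def pmat_def)
  also have "\<dots> = (\<Sum>b\<in>{0..<n}. if g c = Some b then (if f b = Some a then 1 else 0) else 0)"
    using a c by (intro sum.cong) auto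
  also have "\<dots> = (if Option.bind (g c) f = Some a then 1 else 0)"
  proof (cases "g c")
    case None thus ?thesis by simp
  next
    case (Some b)
    with rg[OF c] have "b < n" by auto
    thus ?thesis using Some by (simp add: sum.delta' )
  qed
  finally show "(pmat n f * pmat n g) $$ (a,c) = pmat n (\<lambda>c. Option.bind (g c) f) $$ (a,c)"
    using a c by simp
qed (auto simp: pmat_def)

definition fA :: "nat \<Rightarrow> nat \<Rightarrow> nat option" where
  "fA i c = (if i \<le> c then Some (c - i) else None)"
definition fB :: "nat \<Rightarrow> nat \<Rightarrow> nat \<Rightarrow> nat option" where
  "fB n i c = (if c < i then Some (c + (n - i)) else None)"

lemma Jmat_pow: "Jmat n ^\<^sub>m k = pmat n (fA k)"
proof (induction k)
  case 0
  show ?case by (simp add: Jmat_def pmat_one[symmetric] fA_def)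
next
  case (Suc k)
  have J: "Jmat n = pmat n (fA 1)"
    by (rule eq_matI) (auto simp: Jmat_def pmat_def fA_def)
  have "Jmat n ^\<^sub>m Suc k = pmat n (fA k) * pmat n (fA 1)" using Suc J by simp
  also have "\<dots> = pmat n (\<lambda>c. Option.bind (fA 1 c) (fA k))"
    by (rule pmat_mult) (auto simp: fA_def split: if_splits)
  also have "\<dots> = pmat n (fA (Suc k))"
    by (rule pmat_eqI) (auto simp: fA_def)
  finally show ?case .
qed

lemma JmatT_pow: "transpose_mat (Jmat n) ^\<^sub>m k = pmat n (\<lambda>c. if c + k < n then Some (c + k) else None)"
proof (induction k)
  case 0
  show ?case by (simp add: Jmat_def pmat_one) (rule pmat_eqI, auto)
next
  case (Suc k)
  have J: "transpose_mat (Jmat n) = pmat n (\<lambda>c. if c + 1 < n then Some (c + 1) else None)"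
    by (rule eq_matI) (auto simp: Jmat_def pmat_def)
  have "transpose_mat (Jmat n) ^\<^sub>m Suc k = pmat n (\<lambda>c. if c + k < n then Some (c + k) else None) * pmat n (\<lambda>c. if c + 1 < n then Some (c + 1) else None)" using Suc J by simp
  also have "\<dots> = pmat n (\<lambda>c. Option.bind (if c + 1 < n then Some (c + 1) else None) (\<lambda>c. if c + k < n then Some (c + k) else None))"
    by (rule pmat_mult) (auto split: if_splits)
  also have "\<dots> = pmat n (\<lambda>c. if c + Suc k < n then Some (c + Suc k) else None)"
    by (rule pmat_eqI) auto
  finally show ?case .
qed

lemma B_pmat: "i < n \<Longrightarrow> transpose_mat (Jmat n) ^\<^sub>m (n - i) = pmat n (fB n i)"
  unfolding JmatT_pow by (rule pmat_eqI) (auto simp: fB_def)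




primrec F :: "complex mat \<Rightarrow> nat \<Rightarrow> nat \<Rightarrow> complex mat list \<Rightarrow> nat \<Rightarrow> nat option" where
  "F Am n i [] = Some"
| "F Am n i (S # ws) = (\<lambda>c. Option.bind (F Am n i ws c) (if S = Am then fA i else fB n i))"

definition st :: "nat \<Rightarrow> nat \<Rightarrow> nat \<Rightarrow> nat \<Rightarrow> nat" where
  "st n i s c = (c + s * (n - i)) mod n"

definition agr :: "nat \<Rightarrow> nat \<Rightarrow> nat \<Rightarrow> nat \<Rightarrow> nat \<Rightarrow> bool" where
  "agr n i k c c' = (\<forall>s<k. (i \<le> st n i s c) = (i \<le> st n i s c'))"

lemma st_lt: "0 < n \<Longrightarrow> st n i s c < n" by (simp add: st_def)

lemma st_Suc: assumes "i < n"
  shows "st n i (Suc k) c = (if i \<le> st n i k c then st n i k c - i else st n i k c + (n - i))"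
proof -
  have "st n i (Suc k) c = (st n i k c + (n - i)) mod n"
  proof -
    have "c + Suc k * (n - i) = (c + k * (n - i)) + (n - i)" by simp
    thus ?thesis unfolding st_def by (metis mod_add_left_eq)
  qed
  moreover have "st n i k c < n" using assms by (simp add: st_lt)
  ultimately show ?thesis using assms
    by (auto simp: le_mod_geq)
qed

lemma F_char: assumes "i < n" "c < n"
  shows "F Am n i ws c = None \<or> F Am n i ws c = Some (st n i (length ws) c)"
proof (induction ws)
  case Nil thus ?case using assms by (simp add: st_def)
next
  case (Cons S ws)
  thus ?case using assms by (auto simp: fA_def fB_def st_Suc)
qed

lemma F_Cons_dom: assumes "i < n" "c < n"
  shows "(F Am n i (S # ws) c \<noteq> None) =
    (F Am n i ws c \<noteq> None \<and> (if S = Am then i \<le> st n i (length ws) c else st n i (length ws) c < i))"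
  using F_char[OF assms, of Am ws] by (auto simp: fA_def fB_def split: if_splits)

lemma agr_Suc: "agr n i (Suc k) c c' = (agr n i k c c' \<and> ((i \<le> st n i k c) = (i \<le> st n i k c')))"
  unfolding agr_def using less_Suc_eq by auto

lemma F_agree: assumes "i < n" "c < n" "c' < n" "agr n i (length ws) c c'"
  shows "(F Am n i ws c = None) = (F Am n i ws c' = None)"
  using assms(4)
proof (induction ws)
  case Nil thus ?case by simp
next
  case (Cons S ws)
  hence "agr n i (length ws) c c'" and e: "(i \<le> st n i (length ws) c) = (i \<le> st n i (length ws) c')"
    by (auto simp: agr_Suc)
  with Cons.IH have "(F Am n i ws c = None) = (F Am n i ws c' = None)" by blast
  with e show ?case using F_Cons_dom[OF assms(1,2), of Am S ws] F_Cons_dom[OF assms(1,3), of Am S ws]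
    by (auto simp: not_le)
qed

lemma F_some_agree: assumes "i < n" "c < n" "c' < n"
  "F Am n i ws c \<noteq> None" "F Am n i ws c' \<noteq> None"
  shows "agr n i (length ws) c c'"
  using assms(4,5)
proof (induction ws)
  case Nil thus ?case by (simp add: agr_def)
next
  case (Cons S ws)
  from Cons.prems F_Cons_dom[OF assms(1,2), of Am S ws] F_Cons_dom[OF assms(1,3), of Am S ws]
  have h: "F Am n i ws c \<noteq> None" "F Am n i ws c' \<noteq> None"
    and e: "(i \<le> st n i (length ws) c) = (i \<le> st n i (length ws) c')"
    by (auto split: if_splits)
  from Cons.IH[OF h] e show ?case by (simp add: agr_Suc)
qed

lemma F_append: "F Am n i (u @ v) c = Option.bind (F Am n i v c) (F Am n i u)"
proof (induction u arbitrary: c)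
  case Nil thus ?case by simp
next
  case (Cons S u)
  show ?case by (simp add: Cons.IH bind_assoc)
qed

lemma word_F: assumes "i < n" "set ws \<subseteq> {pmat n (fA i), Bm}" "Bm = pmat n (fB n i)"
  shows "foldr (*) ws (1\<^sub>m n) = pmat n (F (pmat n (fA i)) n i ws)"
  using assms(2)
proof (induction ws)
  case Nil thus ?case by (simp add: pmat_one)
next
  case (Cons S ws)
  hence IH: "foldr (*) ws (1\<^sub>m n) = pmat n (F (pmat n (fA i)) n i ws)" by auto
  have S: "S = pmat n (if S = pmat n (fA i) then fA i else fB n i)"
    using Cons.prems assms(3) by auto
  have "foldr (*) (S # ws) (1\<^sub>m n) = pmat n (if S = pmat n (fA i) then fA i else fB n i) * pmat n (F (pmat n (fA i)) n i ws)"
    using IH S by simp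
  also have "\<dots> = pmat n (F (pmat n (fA i)) n i (S # ws))"
  proof (subst pmat_mult)
    fix c b assume "c < n" "F (pmat n (fA i)) n i ws c = Some b"
    thus "b < n" using F_char[OF assms(1) \<open>c < n\<close>, of "pmat n (fA i)" ws] st_lt[of n] assms(1) by auto
  qed simp
  finally show ?case .
qed




lemma le_div_iff': "0 < (d::nat) \<Longrightarrow> (ip \<le> x div d) = (d * ip \<le> x)"
  by (simp add: less_eq_div_iff_mult_less_eq mult.commute)

lemma st_period_gen: "st n i (s + n) c = st n i s c"
proof -
  have "c + (s + n) * (n - i) = (c + s * (n - i)) + (n - i) * n" by (simp add: algebra_simps)
  thus ?thesis unfolding st_def using mod_add_cong mod_mult_self1 by (metis add.assoc)
qed

lemma st_inj: assumes "coprime m ip" "ip < m" "s < m" "s' < m" "st m ip s y = st m ip s' y"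
  shows "s = s'"
proof -
  have cp: "coprime (m - ip) m"
    using assms(1,2) gcd_diff2_nat[of ip m] by (simp add: coprime_iff_gcd_eq_1 gcd.commute)
  from assms(5) have "[y + s * (m - ip) = y + s' * (m - ip)] (mod m)" by (simp add: st_def cong_def)
  hence "[s * (m - ip) = s' * (m - ip)] (mod m)" by (simp add: cong_add_lcancel_nat)
  hence "[s = s'] (mod m)" using cp by (simp add: cong_mult_rcancel_nat)
  thus ?thesis using assms(3,4) by (simp add: cong_def)
qed




locale nt =
  fixes n i d m ip :: nat
  assumes n_eq: "n = d * m" and i_eq: "i = d * ip" and d_pos: "0 < d"
    and ip_pos: "0 < ip" and ip_lt: "ip < m" and cop: "coprime m ip"
begin

lemma i_lt: "i < n" using n_eq i_eq d_pos ip_lt by simp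
lemma n_pos: "0 < n" using n_eq d_pos ip_lt by simp
lemma ni: "n - i = d * (m - ip)" using n_eq i_eq by (simp add: diff_mult_distrib2)

lemma st_key: assumes "c < n"
  shows "st n i s c = d * st m ip s (c div d) + c mod d"
proof -
  have a: "c + s * (n - i) = c mod d + d * (c div d + s * (m - ip))"
    using ni by (simp add: algebra_simps)
  have "st n i s c = (c + s * (n - i)) mod (d * m)" by (simp add: st_def n_eq)
  also have "\<dots> = d * ((c + s * (n - i)) div d mod m) + (c + s * (n - i)) mod d"
    by (rule mod_mult2_eq)
  also have "(c + s * (n - i)) div d = c div d + s * (m - ip)"
    using a d_pos by simp
  also have "(c + s * (n - i)) mod d = c mod d"
    using a d_pos by simp
  finally show ?thesis by (simp add: st_def)
qed

lemma st_div: "c < n \<Longrightarrow> st n i s c div d = st m ip s (c div d)"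
  using st_key d_pos by simp

lemma typ_key: assumes "c < n" shows "(i \<le> st n i s c) = (ip \<le> st m ip s (c div d))"
  using le_div_iff'[OF d_pos, of ip "st n i s c"] st_div[OF assms] i_eq by simp

lemma agr_key: "c < n \<Longrightarrow> c' < n \<Longrightarrow> agr n i k c c' = agr m ip k (c div d) (c' div d)"
  unfolding agr_def using typ_key by simp

lemma st_period: "st n i (s + m) c = st n i s c"
proof -
  have "m * (n - i) = (m - ip) * n" using ni n_eq by (simp add: mult.commute mult.left_commute)
  hence "c + (s + m) * (n - i) = (c + s * (n - i)) + (m - ip) * n" by (simp add: add_mult_distrib)
  thus ?thesis unfolding st_def by (metis mod_mult_self1)
qed

lemma key_lt: "c < n \<Longrightarrow> c div d < m"
  using n_eq d_pos by (simp add: less_mult_imp_div_less mult.commute)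

lemma F2_key_aux: assumes "y < y'" "y' < m" "agr m ip (m - 1) y y'"
  shows False
proof -
  have m_pos: "0 < m" using ip_lt by simp
  have inv: "s \<le> m - 1 \<Longrightarrow> st m ip s y' = st m ip s y + (y' - y)" for s
  proof (induction s)
    case 0 thus ?case using assms by (simp add: st_def)
  next
    case (Suc s)
    hence IH: "st m ip s y' = st m ip s y + (y' - y)" and s: "s < m - 1" by auto
    have e: "(ip \<le> st m ip s y) = (ip \<le> st m ip s y')" using assms(3) s by (simp add: agr_def)
    have "st m ip (Suc s) y' < m" using st_lt m_pos by blast
    thus ?case using IH e st_Suc[OF ip_lt, of s y] st_Suc[OF ip_lt, of s y'] by (auto split: if_splits)
  qed
  have sub: "(\<lambda>s. st m ip s y) ` {..<m} \<subseteq> {..<m - (y' - y)}"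
  proof
    fix x assume "x \<in> (\<lambda>s. st m ip s y) ` {..<m}"
    then obtain s where s: "s < m" "x = st m ip s y" by auto
    have "st m ip s y' < m" using st_lt m_pos by blast
    thus "x \<in> {..<m - (y' - y)}" using inv[of s] s by auto
  qed
  have "inj_on (\<lambda>s. st m ip s y) {..<m}"
    by (rule inj_onI) (use st_inj[OF cop ip_lt] in auto)
  hence "card ((\<lambda>s. st m ip s y) ` {..<m}) = m" by (simp add: card_image)
  moreover have "card ((\<lambda>s. st m ip s y) ` {..<m}) \<le> m - (y' - y)"
    using card_mono[OF _ sub] by simp
  ultimately show False using assms by simp
qed

lemma F2: assumes "c < n" "c' < n" "agr n i (m - 1) c c'"
  shows "c div d = c' div d"
proof -
  have a: "agr m ip (m - 1) (c div d) (c' div d)" using agr_key assms by simp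
  hence a': "agr m ip (m - 1) (c' div d) (c div d)" by (auto simp: agr_def)
  show ?thesis
    using F2_key_aux[OF _ key_lt[OF assms(2)] a] F2_key_aux[OF _ key_lt[OF assms(1)] a']
    by (cases "c div d < c' div d"; cases "c' div d < c div d") auto
qed

lemma F1: "c < n \<Longrightarrow> c' < n \<Longrightarrow> c div d = c' div d \<Longrightarrow> agr n i k c c'"
  using agr_key by (simp add: agr_def)

lemma K3: assumes "c < n" "j \<le> 2 * m - 3" "st n i j c = st n i (m - 2) c"
  shows "j = m - 2"
proof -
  have e: "st m ip j (c div d) = st m ip (m - 2) (c div d)" using assms st_div by metis
  show ?thesis
  proof (cases "j < m")
    case True thus ?thesis using st_inj[OF cop ip_lt True _ e] ip_lt by simp
  next
    case False
    then obtain t where t: "j = t + m" by (metis add.commute le_add_diff_inverse not_less)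
    have "st m ip j (c div d) = st m ip t (c div d)" using t st_period_gen by simp
    hence "t = m - 2" using st_inj[OF cop ip_lt _ _] e t assms(2) ip_lt by simp
    thus ?thesis using t assms(2) ip_lt by simp
  qed
qed

definition c1 where "c1 = d * (m - ip - 1)"
definition c2 where "c2 = d * (m - ip)"

lemma c_lt: "c1 < n" "c2 < n"
  using n_eq d_pos ip_pos ip_lt by (auto simp: c1_def c2_def)

lemma c_div: "c1 div d = m - ip - 1" "c2 div d = m - ip"
  using d_pos by (auto simp: c1_def c2_def)

lemma y2_val: assumes "s \<le> m - 2" shows "st m ip s (m - ip) = (Suc s * (m - ip)) mod m"
  unfolding st_def by simp

lemma y2_nz: assumes "s \<le> m - 2" shows "st m ip s (m - ip) \<noteq> 0"
proof
  assume "st m ip s (m - ip) = 0"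
  hence "(Suc s * (m - ip)) mod m = 0" using y2_val[OF assms] by simp
  hence "m dvd Suc s * (m - ip)" by (metis mod_eq_0_iff_dvd)
  moreover have "coprime m (m - ip)"
    using cop ip_lt gcd_diff2_nat[of ip m] by (simp add: coprime_iff_gcd_eq_1 gcd.commute)
  ultimately have "m dvd Suc s" by (metis coprime_dvd_mult_left_iff)
  hence "m \<le> Suc s" by (rule dvd_imp_le) simp
  thus False using assms ip_lt ip_pos by simp
qed

lemma y1_val: assumes "s \<le> m - 2" shows "st m ip s (m - ip - 1) = st m ip s (m - ip) - 1"
proof -
  have "m - ip + s * (m - ip) = Suc (m - ip - 1 + s * (m - ip))" using ip_lt by simp
  hence "st m ip s (m - ip) = Suc (st m ip s (m - ip - 1)) mod m"
    unfolding st_def by (metis mod_Suc_eq)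
  moreover have "st m ip s (m - ip - 1) < m" using st_lt ip_lt by simp
  ultimately show ?thesis using y2_nz[OF assms] by (auto simp: mod_Suc split: if_splits)
qed

lemma y2_ne_ip: assumes "s < m - 2" shows "st m ip s (m - ip) \<noteq> ip"
proof
  assume h: "st m ip s (m - ip) = ip"
  have "st m ip (Suc s) (m - ip) = (ip + (m - ip)) mod m"
    using st_Suc[OF ip_lt, of s "m - ip"] h ip_lt by simp
  hence "st m ip (Suc s) (m - ip) = 0" using ip_lt by simp
  thus False using y2_nz[of "Suc s"] assms by simp
qed

lemma y2_at: "st m ip (m - 2) (m - ip) = ip"
proof -
  obtain k where k: "m - ip = Suc k" using ip_lt by (metis Suc_diff_Suc)
  have m: "m = ip + Suc k" using k ip_lt by simp
  have s2: "Suc (m - 2) = ip + k" using m ip_pos by simp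
  have e1: "(ip + k) * Suc k = k * (ip + Suc k) + ip" by (simp add: algebra_simps)
  have "Suc (m - 2) * (m - ip) = k * m + ip"
    unfolding s2 k using e1 m by simp
  hence "st m ip (m - 2) (m - ip) = (k * m + ip) mod m" using y2_val[of "m - 2"] by simp
  thus ?thesis using ip_lt by simp
qed

lemma wit_agr: "agr n i (m - 2) c1 c2"
proof -
  have "agr m ip (m - 2) (m - ip - 1) (m - ip)"
  unfolding agr_def
proof (intro allI impI)
  fix s assume s: "s < m - 2"
  hence s': "s \<le> m - 2" by simp
  show "(ip \<le> st m ip s (m - ip - 1)) = (ip \<le> st m ip s (m - ip))"
    using y1_val[OF s'] y2_ne_ip[OF s] by auto
qed
  thus ?thesis using agr_key[OF c_lt] c_div by simp
qed

lemma wit_diff: "(i \<le> st n i (m - 2) c1) \<noteq> (i \<le> st n i (m - 2) c2)"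
  unfolding typ_key[OF c_lt(1)] typ_key[OF c_lt(2)] c_div
  using y1_val[of "m - 2"] y2_at ip_pos by simp

end



lemma lin_comb_carrier[simp]: "lin_comb n xs \<in> carrier_mat n n"
  by (induction xs) (auto simp: lin_comb_def)

lemma lin_comb_Nil: "lin_comb n [] = 0\<^sub>m n n"
  by (simp add: lin_comb_def)

lemma lin_comb_Cons: "lin_comb n ((c, X) # xs) = c \<cdot>\<^sub>m X + lin_comb n xs"
  by (simp add: lin_comb_def)

lemma cspan_sub:
  assumes "T \<subseteq> V" "0\<^sub>m n n \<in> V" "\<And>X Y. X \<in> V \<Longrightarrow> Y \<in> V \<Longrightarrow> X + Y \<in> V"
    "\<And>c X. X \<in> V \<Longrightarrow> c \<cdot>\<^sub>m X \<in> V"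
  shows "cspan n T \<subseteq> V"
proof
  fix M assume "M \<in> cspan n T"
  then obtain xs where M: "M = lin_comb n xs" and xs: "set (map snd xs) \<subseteq> T"
    by (auto simp: cspan_def)
  have "lin_comb n xs \<in> V" using xs
  proof (induction xs)
    case Nil thus ?case using assms(2) by (simp add: lin_comb_def)
  next
    case (Cons p xs)
    obtain c X where p: "p = (c, X)" by fastforce
    from Cons p have "X \<in> V" "lin_comb n xs \<in> V" using assms(1) by auto
    thus ?case using p assms(3,4) by (simp add: lin_comb_Cons)
  qed
  thus "M \<in> V" using M by simp
qed

lemma cspan_zero: "0\<^sub>m n n \<in> cspan n T"
  unfolding cspan_def by (intro CollectI exI[of _ "[]"]) (simp add: lin_comb_Nil)

lemma cspan_gen: assumes "X \<in> T" "X \<in> carrier_mat n n" shows "X \<in> cspan n T"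
proof -
  have "1 \<cdot>\<^sub>m X = X" using assms(2) by (intro eq_matI) auto
  hence "lin_comb n [(1, X)] = X" using assms(2) by (simp add: lin_comb_Cons lin_comb_Nil)
  moreover have "set (map snd [(1::complex, X)]) \<subseteq> T" using assms(1) by simp
  ultimately show ?thesis unfolding cspan_def by (metis (mono_tags, lifting) mem_Collect_eq)
qed

lemma lin_comb_append: assumes "set (map snd xs) \<subseteq> carrier_mat n n"
  shows "lin_comb n (xs @ ys) = lin_comb n xs + lin_comb n ys"
  using assms
proof (induction xs)
  case Nil thus ?case by (simp add: lin_comb_Nil)
next
  case (Cons p xs)
  obtain c X where p: "p = (c, X)" by fastforce
  with Cons have X: "X \<in> carrier_mat n n" by auto
  have "lin_comb n ((p # xs) @ ys) = c \<cdot>\<^sub>m X + (lin_comb n xs + lin_comb n ys)"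
    using Cons p by (simp add: lin_comb_Cons)
  also have "\<dots> = lin_comb n (p # xs) + lin_comb n ys"
    using X p assoc_add_mat[of "c \<cdot>\<^sub>m X" n n "lin_comb n xs" "lin_comb n ys"] by (simp add: lin_comb_Cons)
  finally show ?case .
qed

lemma lin_comb_smult: assumes "set (map snd xs) \<subseteq> carrier_mat n n"
  shows "a \<cdot>\<^sub>m lin_comb n xs = lin_comb n (map (\<lambda>(c, X). (a * c, X)) xs)"
  using assms
proof (induction xs)
  case Nil thus ?case by (simp add: lin_comb_Nil)
next
  case (Cons p xs)
  obtain c X where p: "p = (c, X)" by fastforce
  with Cons have X: "X \<in> carrier_mat n n" and IH: "a \<cdot>\<^sub>m lin_comb n xs = lin_comb n (map (\<lambda>(c, X). (a * c, X)) xs)" by auto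
  have "a \<cdot>\<^sub>m lin_comb n (p # xs) = a \<cdot>\<^sub>m (c \<cdot>\<^sub>m X) + a \<cdot>\<^sub>m lin_comb n xs"
    using X p add_smult_distrib_left_mat[of "c \<cdot>\<^sub>m X" n n "lin_comb n xs" a] by (simp add: lin_comb_Cons)
  also have "a \<cdot>\<^sub>m (c \<cdot>\<^sub>m X) = (a * c) \<cdot>\<^sub>m X" by (rule eq_matI) auto
  finally show ?case using IH p by (simp add: lin_comb_Cons)
qed

lemma cspan_add: assumes "T \<subseteq> carrier_mat n n" "X \<in> cspan n T" "Y \<in> cspan n T"
  shows "X + Y \<in> cspan n T"
proof -
  obtain xs where X: "X = lin_comb n xs" and xs: "set (map snd xs) \<subseteq> T" using assms(2) by (auto simp: cspan_def)
  obtain ys where Y: "Y = lin_comb n ys" and ys: "set (map snd ys) \<subseteq> T" using assms(3) by (auto simp: cspan_def)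
  have "X + Y = lin_comb n (xs @ ys)" using lin_comb_append[of xs n ys] xs assms(1) X Y by auto
  moreover have "set (map snd (xs @ ys)) \<subseteq> T" using xs ys by auto
  ultimately show ?thesis unfolding cspan_def by blast
qed

lemma cspan_smult: assumes "T \<subseteq> carrier_mat n n" "X \<in> cspan n T"
  shows "a \<cdot>\<^sub>m X \<in> cspan n T"
proof -
  obtain xs where X: "X = lin_comb n xs" and xs: "set (map snd xs) \<subseteq> T" using assms(2) by (auto simp: cspan_def)
  have "a \<cdot>\<^sub>m X = lin_comb n (map (\<lambda>(c, X). (a * c, X)) xs)" using lin_comb_smult[of xs n a] xs assms(1) X by auto
  moreover have "set (map snd (map (\<lambda>(c, X). (a * c, X)) xs)) \<subseteq> T" using xs by auto
  ultimately show ?thesis unfolding cspan_def by blast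
qed

lemma cspan_mono: "T \<subseteq> U \<Longrightarrow> cspan n T \<subseteq> cspan n U"
  unfolding cspan_def by blast

lemma words_Suc: "words n S (Suc j) = {s * w | s w. s \<in> S \<and> w \<in> words n S j}"
proof (intro equalityI subsetI)
  fix X assume "X \<in> words n S (Suc j)"
  then obtain ws where "X = foldr (*) ws (1\<^sub>m n)" "length ws = Suc j" "set ws \<subseteq> S" by (auto simp: words_def)
  thus "X \<in> {s * w | s w. s \<in> S \<and> w \<in> words n S j}"
    by (cases ws) (auto simp: words_def)
next
  fix X assume "X \<in> {s * w | s w. s \<in> S \<and> w \<in> words n S j}"
  then obtain s ws where "X = s * foldr (*) ws (1\<^sub>m n)" "length ws = j" "set ws \<subseteq> S" "s \<in> S" by (auto simp: words_def)
  thus "X \<in> words n S (Suc j)" unfolding words_def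
    by (intro CollectI exI[of _ "s # ws"]) auto
qed

lemma words_carrier: "S \<subseteq> carrier_mat n n \<Longrightarrow> words n S j \<subseteq> carrier_mat n n"
proof (induction j)
  case 0 thus ?case by (auto simp: words_def)
next
  case (Suc j) thus ?case by (force simp: words_Suc intro: mult_carrier_mat)
qed

definition Lg :: "nat \<Rightarrow> complex mat set \<Rightarrow> nat \<Rightarrow> nat \<Rightarrow> complex mat set" where
  "Lg n S lo k = cspan n (\<Union>j\<in>{lo..k}. words n S j)"

lemma gens_carrier: "S \<subseteq> carrier_mat n n \<Longrightarrow> (\<Union>j\<in>{lo..k}. words n S j) \<subseteq> carrier_mat n n"
  using words_carrier by blast

lemma word_in_Lg: "S \<subseteq> carrier_mat n n \<Longrightarrow> lo \<le> j \<Longrightarrow> j \<le> k \<Longrightarrow> X \<in> words n S j \<Longrightarrow> X \<in> Lg n S lo k"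
  unfolding Lg_def using words_carrier[of S n j] by (intro cspan_gen) auto

lemma mult_in_Lg: assumes S: "S \<subseteq> carrier_mat n n" and s: "s \<in> S" and X: "X \<in> Lg n S lo k"
  shows "s * X \<in> Lg n S lo (Suc k)"
proof -
  have sc: "s \<in> carrier_mat n n" using S s by auto
  have "Lg n S lo k \<subseteq> {X \<in> carrier_mat n n. s * X \<in> Lg n S lo (Suc k)}"
    unfolding Lg_def[of n S lo k]
  proof (rule cspan_sub)
    show "(\<Union>j\<in>{lo..k}. words n S j) \<subseteq> {X \<in> carrier_mat n n. s * X \<in> Lg n S lo (Suc k)}"
    proof
      fix w assume "w \<in> (\<Union>j\<in>{lo..k}. words n S j)"
      then obtain j where j: "lo \<le> j" "j \<le> k" "w \<in> words n S j" by auto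
      have "s * w \<in> words n S (Suc j)" using j s by (auto simp: words_Suc)
      hence "s * w \<in> Lg n S lo (Suc k)" using j S by (intro word_in_Lg[of _ _ _ "Suc j"]) auto
      thus "w \<in> {X \<in> carrier_mat n n. s * X \<in> Lg n S lo (Suc k)}" using j words_carrier[OF S] by auto
    qed
  next
    show "0\<^sub>m n n \<in> {X \<in> carrier_mat n n. s * X \<in> Lg n S lo (Suc k)}"
      using sc cspan_zero by (auto simp: Lg_def)
  next
    fix X Y assume "X \<in> {X \<in> carrier_mat n n. s * X \<in> Lg n S lo (Suc k)}" "Y \<in> {X \<in> carrier_mat n n. s * X \<in> Lg n S lo (Suc k)}"
    thus "X + Y \<in> {X \<in> carrier_mat n n. s * X \<in> Lg n S lo (Suc k)}"
      using sc cspan_add[OF gens_carrier[OF S]] by (auto simp: mult_add_distrib_mat Lg_def)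
  next
    fix c X assume "X \<in> {X \<in> carrier_mat n n. s * X \<in> Lg n S lo (Suc k)}"
    thus "c \<cdot>\<^sub>m X \<in> {X \<in> carrier_mat n n. s * X \<in> Lg n S lo (Suc k)}"
      using sc cspan_smult[OF gens_carrier[OF S]] by (auto simp: mult_smult_distrib Lg_def)
  qed
  thus ?thesis using X by auto
qed

lemma Lg_mono: "k \<le> k' \<Longrightarrow> Lg n S lo k \<subseteq> Lg n S lo k'"
  unfolding Lg_def by (intro cspan_mono) (auto, meson atLeastAtMost_iff le_trans)

lemma Lg_stab: assumes S: "S \<subseteq> carrier_mat n n" and lo: "lo \<le> Suc k"
  and e: "Lg n S lo k = Lg n S lo (Suc k)"
  shows "Lg n S lo (Suc k) = Lg n S lo (Suc (Suc k))"
proof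
  show "Lg n S lo (Suc k) \<subseteq> Lg n S lo (Suc (Suc k))" by (rule Lg_mono) simp
next
  show "Lg n S lo (Suc (Suc k)) \<subseteq> Lg n S lo (Suc k)"
    unfolding Lg_def[of n S lo "Suc (Suc k)"]
  proof (rule cspan_sub)
    show "(\<Union>j\<in>{lo..Suc (Suc k)}. words n S j) \<subseteq> Lg n S lo (Suc k)"
    proof
      fix w assume "w \<in> (\<Union>j\<in>{lo..Suc (Suc k)}. words n S j)"
      then obtain j where j: "lo \<le> j" "j \<le> Suc (Suc k)" "w \<in> words n S j" by auto
      show "w \<in> Lg n S lo (Suc k)"
      proof (cases "j \<le> Suc k")
        case True thus ?thesis using j S word_in_Lg by blast
      next
        case False
        hence jj: "j = Suc (Suc k)" using j by simp
        then obtain s v where w: "w = s * v" "s \<in> S" "v \<in> words n S (Suc k)" using j by (auto simp: words_Suc)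
        have "v \<in> Lg n S lo (Suc k)" using w S lo word_in_Lg by blast
        hence "v \<in> Lg n S lo k" using e by simp
        thus ?thesis using mult_in_Lg[OF S w(2)] w by simp
      qed
    qed
  qed (use cspan_zero cspan_add[OF gens_carrier[OF S]] cspan_smult[OF gens_carrier[OF S]] in \<open>auto simp: Lg_def\<close>)
qed

lemma least_stab:
  fixes f :: "nat \<Rightarrow> 'a"
  assumes st: "\<And>k. f k = f (Suc k) \<Longrightarrow> f (Suc k) = f (Suc (Suc k))"
    and N: "0 < N" "f (N - 1) \<noteq> f N" "f N = f (Suc N)"
  shows "(LEAST k. f k = f (Suc k)) = N"
proof (rule Least_equality)
  show "f N = f (Suc N)" by (rule N(3))
next
  fix k assume k: "f k = f (Suc k)"
  have "\<And>j. f (k + j) = f (Suc (k + j))"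
  proof -
    fix j show "f (k + j) = f (Suc (k + j))"
      by (induction j) (use k st in auto)
  qed
  show "N \<le> k"
  proof (rule ccontr)
    assume "\<not> N \<le> k"
    hence "N - 1 = k + (N - 1 - k)" "N = Suc (k + (N - 1 - k))" by auto
    thus False using \<open>\<And>j. f (k + j) = f (Suc (k + j))\<close>[of "N - 1 - k"] N(2) by metis
  qed
qed




context nt begin

abbreviation "Am \<equiv> pmat n (fA i)"
abbreviation "Bm \<equiv> pmat n (fB n i)"
abbreviation "SS \<equiv> {Am, Bm}"

lemma m_ge2: "2 \<le> m" using ip_pos ip_lt by simp

lemma SS_carrier: "SS \<subseteq> carrier_mat n n" by simp

lemma AB_ne: "Am \<noteq> Bm"
proof
  assume "Am = Bm"
  hence "Am $$ (0, i) = Bm $$ (0, i)" by simp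
  thus False using i_lt by (simp add: fA_def fB_def)
qed

lemma word_pmat: "set ws \<subseteq> SS \<Longrightarrow> foldr (*) ws (1\<^sub>m n) = pmat n (F Am n i ws)"
  by (rule word_F[OF i_lt _ refl])

lemma upper: assumes lo: "lo \<le> 1"
  shows "Lg n SS lo (2 * m - 2) = Lg n SS lo (Suc (2 * m - 2))"
proof
  show "Lg n SS lo (2 * m - 2) \<subseteq> Lg n SS lo (Suc (2 * m - 2))" by (rule Lg_mono) simp
next
  show "Lg n SS lo (Suc (2 * m - 2)) \<subseteq> Lg n SS lo (2 * m - 2)"
    unfolding Lg_def[of n SS lo "Suc (2 * m - 2)"]
  proof (rule cspan_sub)
    show "(\<Union>j\<in>{lo..Suc (2 * m - 2)}. words n SS j) \<subseteq> Lg n SS lo (2 * m - 2)"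
    proof
      fix w assume "w \<in> (\<Union>j\<in>{lo..Suc (2 * m - 2)}. words n SS j)"
      then obtain j where j: "lo \<le> j" "j \<le> Suc (2 * m - 2)" "w \<in> words n SS j" by auto
      show "w \<in> Lg n SS lo (2 * m - 2)"
      proof (cases "j \<le> 2 * m - 2")
        case True thus ?thesis using j SS_carrier word_in_Lg by blast
      next
        case False
        hence jj: "j = 2 * m - 1" using j m_ge2 by simp
        obtain ws where w: "w = foldr (*) ws (1\<^sub>m n)" "length ws = 2 * m - 1" "set ws \<subseteq> SS"
          using j(3) jj by (auto simp: words_def)
        define u where "u = take m ws"
        define v where "v = drop m ws"
        have ws: "ws = u @ v" by (simp add: u_def v_def)
        have lv: "length v = m - 1" using w(2) by (simp add: v_def)
        have sv: "set v \<subseteq> SS" using w(3) by (simp add: v_def) (meson set_drop_subset subset_trans)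
        have wF: "w = pmat n (F Am n i ws)" using w word_pmat by simp
        show ?thesis
        proof (cases "\<exists>c0<n. F Am n i ws c0 \<noteq> None")
          case False
          hence "w = 0\<^sub>m n n" using wF by (intro trans[OF wF] pmat_none) auto
          thus ?thesis using cspan_zero by (simp add: Lg_def)
        next
          case True
          then obtain c0 where c0: "c0 < n" "F Am n i ws c0 \<noteq> None" by auto
          have v0: "F Am n i v c0 \<noteq> None" using c0(2) unfolding ws F_append by (cases "F Am n i v c0") auto
          have eq: "F Am n i ws c = F Am n i v c" if c: "c < n" for c
          proof (cases "F Am n i v c")
            case None thus ?thesis unfolding ws F_append by simp
          next
            case (Some x)
            have "agr n i (m - 1) c c0" using F_some_agree[OF i_lt c c0(1) _ v0] Some lv by simp
            hence "c div d = c0 div d" using F2 c c0(1) by blast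
            hence "agr n i (length ws) c c0" using F1 c c0(1) by blast
            hence "F Am n i ws c \<noteq> None" using F_agree[OF i_lt c c0(1), of ws Am] c0(2) by blast
            hence "F Am n i ws c = Some (st n i (2 * m - 1) c)" using F_char[OF i_lt c, of Am ws] w(2) by auto
            also have "st n i (2 * m - 1) c = st n i (m - 1) c"
            proof -
              have "2 * m - 1 = m - 1 + m" using m_ge2 by simp
              thus ?thesis using st_period[of "m - 1" c] by simp
            qed
            also have "Some (st n i (m - 1) c) = F Am n i v c"
              using F_char[OF i_lt c, of Am v] Some lv by auto
            finally show ?thesis .
          qed
          have "pmat n (F Am n i ws) = pmat n (F Am n i v)" by (rule pmat_eqI) (rule eq)
          hence "w = pmat n (F Am n i v)" using wF by simp
          also have "\<dots> = foldr (*) v (1\<^sub>m n)" using word_pmat[OF sv] by simp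
          finally have "w \<in> words n SS (m - 1)" using lv sv by (auto simp: words_def)
          thus ?thesis using word_in_Lg[OF SS_carrier, of lo "m - 1" "2 * m - 2"] lo m_ge2 by simp
        qed
      qed
    qed
  qed (use cspan_zero cspan_add[OF gens_carrier[OF SS_carrier]] cspan_smult[OF gens_carrier[OF SS_carrier]] in \<open>auto simp: Lg_def\<close>)
qed

primrec wit :: "nat \<Rightarrow> complex mat list" where
  "wit 0 = []"
| "wit (Suc k) = (if i \<le> st n i k c2 then Am else Bm) # wit k"

lemma wit_props: "length (wit k) = k" "set (wit k) \<subseteq> SS"
  by (induction k) auto

lemma wit_F: "F Am n i (wit k) c2 = Some (st n i k c2)"
proof (induction k)
  case 0 thus ?case by (simp add: st_def c_lt)
next
  case (Suc k)
  show ?case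
  proof (cases "i \<le> st n i k c2")
    case True
    have "fA i (st n i k c2) = Some (st n i k c2 - i)" using True by (simp add: fA_def)
    thus ?thesis using True Suc.IH st_Suc[OF i_lt, of k c2] by simp
  next
    case False
    have "fB n i (st n i k c2) = Some (st n i k c2 + (n - i))" using False by (simp add: fB_def)
    thus ?thesis using False Suc.IH st_Suc[OF i_lt, of k c2] AB_ne by simp
  qed
qed

lemma lower: assumes lo: "lo \<le> 1"
  shows "Lg n SS lo (2 * m - 2 - 1) \<noteq> Lg n SS lo (2 * m - 2)"
proof
  assume eqL: "Lg n SS lo (2 * m - 2 - 1) = Lg n SS lo (2 * m - 2)"
  define W where "W = foldr (*) (wit (2 * m - 2)) (1\<^sub>m n)"
  have WF: "W = pmat n (F Am n i (wit (2 * m - 2)))" unfolding W_def by (rule word_pmat[OF wit_props(2)])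
  have "W \<in> words n SS (2 * m - 2)" unfolding W_def words_def using wit_props by blast
  hence W_in: "W \<in> Lg n SS lo (2 * m - 2 - 1)" unfolding eqL
    using word_in_Lg[OF SS_carrier, of lo "2 * m - 2" "2 * m - 2"] lo m_ge2 by simp
  define p1 where "p1 = st n i (m - 2) c1"
  define p2 where "p2 = st n i (m - 2) c2"
  have p: "p1 < n" "p2 < n" using st_lt n_pos by (auto simp: p1_def p2_def)
  define V :: "complex mat set" where "V = {X \<in> carrier_mat n n. X $$ (p1, c1) = X $$ (p2, c2)}"
  have "Lg n SS lo (2 * m - 2 - 1) \<subseteq> V"
    unfolding Lg_def
  proof (rule cspan_sub)
    show "(\<Union>j\<in>{lo..2 * m - 2 - 1}. words n SS j) \<subseteq> V"
    proof
      fix w assume "w \<in> (\<Union>j\<in>{lo..2 * m - 2 - 1}. words n SS j)"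
      then obtain j where j: "j \<le> 2 * m - 3" "w \<in> words n SS j" by auto
      obtain ws where w: "w = foldr (*) ws (1\<^sub>m n)" "length ws = j" "set ws \<subseteq> SS"
        using j(2) by (auto simp: words_def)
      have wF: "w = pmat n (F Am n i ws)" using w word_pmat by simp
      have "(F Am n i ws c1 = Some p1) = (F Am n i ws c2 = Some p2)"
      proof (cases "j = m - 2")
        case True
        have "(F Am n i ws c1 = None) = (F Am n i ws c2 = None)"
          using F_agree[OF i_lt c_lt] wit_agr True w(2) by simp
        thus ?thesis using F_char[OF i_lt c_lt(1), of Am ws] F_char[OF i_lt c_lt(2), of Am ws] True w(2)
          by (auto simp: p1_def p2_def)
      next
        case False
        have "F Am n i ws c1 \<noteq> Some p1"
        proof
          assume "F Am n i ws c1 = Some p1"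
          hence "st n i j c1 = st n i (m - 2) c1" using F_char[OF i_lt c_lt(1), of Am ws] w(2) by (auto simp: p1_def)
          thus False using K3[OF c_lt(1) j(1)] False by simp
        qed
        moreover have "F Am n i ws c2 \<noteq> Some p2"
        proof
          assume "F Am n i ws c2 = Some p2"
          hence "st n i j c2 = st n i (m - 2) c2" using F_char[OF i_lt c_lt(2), of Am ws] w(2) by (auto simp: p2_def)
          thus False using K3[OF c_lt(2) j(1)] False by simp
        qed
        ultimately show ?thesis by simp
      qed
      thus "w \<in> V" unfolding V_def wF using p c_lt by simp
    qed
  qed (auto simp: V_def p c_lt)
  hence WV: "W \<in> V" using W_in by blast
  have n1: "F Am n i (wit (2 * m - 2)) c1 = None"
  proof (rule ccontr)
    assume a1: "F Am n i (wit (2 * m - 2)) c1 \<noteq> None"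
    have a2: "F Am n i (wit (2 * m - 2)) c2 \<noteq> None" by (simp add: wit_F)
    have "agr n i (length (wit (2 * m - 2))) c1 c2" by (rule F_some_agree[OF i_lt c_lt(1) c_lt(2) a1 a2])
    hence ag: "agr n i (2 * m - 2) c1 c2" by (simp only: wit_props(1))
    have lt: "m - 2 < 2 * m - 2" using m_ge2 by simp
    have "(i \<le> st n i (m - 2) c1) = (i \<le> st n i (m - 2) c2)" using ag lt unfolding agr_def by blast
    thus False using wit_diff by blast
  qed
  have sp: "st n i (2 * m - 2) c2 = p2"
  proof -
    have "2 * m - 2 = m - 2 + m" using m_ge2 by simp
    thus ?thesis using st_period[of "m - 2" c2] by (simp add: p2_def)
  qed
  have h1: "W $$ (p1, c1) = (if F Am n i (wit (2 * m - 2)) c1 = Some p1 then 1 else 0)"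
    unfolding WF by (rule pmat_index[OF p(1) c_lt(1)])
  have h2: "W $$ (p2, c2) = (if F Am n i (wit (2 * m - 2)) c2 = Some p2 then 1 else 0)"
    unfolding WF by (rule pmat_index[OF p(2) c_lt(2)])
  have h3: "W $$ (p1, c1) = W $$ (p2, c2)" using WV unfolding V_def by blast
  have "F Am n i (wit (2 * m - 2)) c2 = Some p2" using wit_F[of "2 * m - 2"] sp by simp
  with h1 h2 h3 n1 show False by simp
qed

lemma len_gen: assumes "lo \<le> 1"
  shows "(LEAST k. Lg n SS lo k = Lg n SS lo (Suc k)) = 2 * m - 2"
proof (rule least_stab)
  fix k assume e: "Lg n SS lo k = Lg n SS lo (Suc k)"
  have "lo \<le> Suc k" using assms by simp
  from Lg_stab[OF SS_carrier this e]
  show "Lg n SS lo (Suc k) = Lg n SS lo (Suc (Suc k))" .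
next
  show "0 < 2 * m - 2" using m_ge2 by simp
next
  show "Lg n SS lo (2 * m - 2 - 1) \<noteq> Lg n SS lo (2 * m - 2)" by (rule lower[OF assms])
next
  show "Lg n SS lo (2 * m - 2) = Lg n SS lo (Suc (2 * m - 2))" by (rule upper[OF assms])
qed

end

lemma L_Lg: "L n S k = Lg n S 0 k" by (simp add: L_def Lg_def)
lemma L0_Lg: "L0 n S k = Lg n S 1 k" by (simp add: L0_def Lg_def)

theorem mainTheorem9:
  fixes n i d :: nat
  assumes "1 \<le> i" and "i < n" and "d = gcd n i"
  shows "len n {Jmat n ^\<^sub>m i, transpose_mat (Jmat n) ^\<^sub>m (n - i)} = 2 * n div d - 2 \<and>
         len0 n {Jmat n ^\<^sub>m i, transpose_mat (Jmat n) ^\<^sub>m (n - i)} = 2 * n div d - 2"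
proof -
  have dpos: "0 < d" using assms by simp
  have dn: "d dvd n" "d dvd i" using assms by auto
  obtain m where m: "n = d * m" using dn(1) by (rule dvdE)
  obtain ip where ip: "i = d * ip" using dn(2) by (rule dvdE)
  have md: "n div d = m" using m dpos by simp
  have ipd: "i div d = ip" using ip dpos by simp
  have nt: "nt n i d (n div d) (i div d)"
  proof
    show "n = d * (n div d)" "i = d * (i div d)" unfolding md ipd by (fact m, fact ip)
    show "0 < d" by (rule dpos)
    show "0 < i div d" unfolding ipd using ip assms(1) by (cases ip) auto
    show "i div d < n div d" unfolding ipd md using ip m assms(2) by simp
    show "coprime (n div d) (i div d)" using assms div_gcd_coprime[of n i] by simp
  qed
  have S: "{Jmat n ^\<^sub>m i, transpose_mat (Jmat n) ^\<^sub>m (n - i)} = {pmat n (fA i), pmat n (fB n i)}"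
    using Jmat_pow B_pmat[OF assms(2)] by simp
  have N: "2 * n div d - 2 = 2 * (n div d) - 2" using m dpos by simp
  have e0: "(LEAST k. Lg n {pmat n (fA i), pmat n (fB n i)} 0 k = Lg n {pmat n (fA i), pmat n (fB n i)} 0 (Suc k)) = 2 * (n div d) - 2"
    by (rule nt.len_gen[OF nt]) simp
  have e1: "(LEAST k. Lg n {pmat n (fA i), pmat n (fB n i)} 1 k = Lg n {pmat n (fA i), pmat n (fB n i)} 1 (Suc k)) = 2 * (n div d) - 2"
    by (rule nt.len_gen[OF nt]) simp
  show ?thesis unfolding S N len_def len0_def L_Lg L0_Lg using e0 e1 by (rule conjI)
qed


end
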